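(* Consider the Lion (v1) algorithm (defined in the context) under Assumptions (A1) and (A3), with parameters $\beta_1,\beta_2\in(0,1]$ satisfying $\beta_2^2\le\beta_1\le\sqrt{\beta_2}$, $\eta>0$, $0\le\lambda\le\frac1{2\eta T}$ and $\|\mathbf{x}_1\|_\infty\le\eta$. Then $$\mathbb{E}\left[\frac1T\sum_{t=1}^T\|\mathbf{v}_t-\nabla f(\mathbf{x}_t)\|^2\right]\le \frac{2\sigma^2}{\beta_2T}+\frac{16\eta^2L^2d}{\beta_2^2}+2\beta_2\sigma^2 .$$
   Context: Setting: $f:\mathbb{R}^d\to\mathbb{R}$ is accessed through a stochastic gradient oracle: at each query a fresh sample $\xi$ is drawn from a fixed distribution, independently of everything before, and $\nabla f(\mathbf{x};\xi)$ is returned. $\|\cdot\|$ is the Euclidean norm; $\operatorname{sign}$ acts coordinatewise with values in $\{-1,0,1\}$. (A1) $\|\nabla f(\mathbf{x})-\nabla f(\mathbf{y})\|\le L\|\mathbf{x}-\mathbf{y}\|$ for all $\mathbf{x},\mathbf{y}$. (A3) $\mathbb{E}_\xi[\nabla f(\mathbf{x};\xi)]=\nabla f(\mathbf{x})$ and $\mathbb{E}_\xi\|\nabla f(\mathbf{x};\xi)-\nabla f(\mathbf{x})\|^2\le\sigma^2$ for all $\mathbf{x}$. Lion (v1): given $\mathbf{x}_1\in\mathbb{R}^d$, $\beta_1,\beta_2\in(0,1]$, $\eta>0$, $\lambda\ge0$, horizon $T$. At $t=1$ draw $\xi_1$ and set $\mathbf{v}_1=\mathbf{m}_1=\nabla f(\mathbf{x}_1;\xi_1)$.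 For $t\ge2$ draw a fresh $\xi_t$ and set $\mathbf{v}_t=(1-\beta_1)\mathbf{m}_{t-1}+\beta_1\nabla f(\mathbf{x}_t;\xi_t)$, $\mathbf{m}_t=(1-\beta_2)\mathbf{m}_{t-1}+\beta_2\nabla f(\mathbf{x}_t;\xi_t)$. For all $t\ge1$: $\mathbf{x}_{t+1}=\mathbf{x}_t-\eta(\operatorname{sign}(\mathbf{v}_t)+\lambda\mathbf{x}_t)$. *)

theory Defs
  imports "HOL-Probability.Probability"
begin

definition sign_vec :: "real^'d \<Rightarrow> real^'d" where
  "sign_vec v = (\<chi> i. sgn (v $ i))"

text \<open>The sample sequence is \<open>\<omega> :: nat \<Rightarrow> 'b\<close>, with \<open>\<omega> t\<close> the
  sample xi_t drawn at iteration t (t \<ge> 1; \<open>\<omega> 0\<close> is unused).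
  \<open>lion_st g beta1 beta2 eta lam x1 \<omega> n\<close> is the triple (x_t, m_t, v_t) for t = n+1.\<close>
primrec lion_st ::
  "(real^'d \<Rightarrow> 'b \<Rightarrow> real^'d) \<Rightarrow> real \<Rightarrow> real \<Rightarrow> real \<Rightarrow> real \<Rightarrow> real^'d
   \<Rightarrow> (nat \<Rightarrow> 'b) \<Rightarrow> nat \<Rightarrow> (real^'d) \<times> (real^'d) \<times> (real^'d)" where
  "lion_st g beta1 beta2 eta lam x1 \<omega> 0 = (x1, g x1 (\<omega> 1), g x1 (\<omega> 1))"
| "lion_st g beta1 beta2 eta lam x1 \<omega> (Suc n) =
     (let (x, m, v) = lion_st g beta1 beta2 eta lam x1 \<omega> n;
          x' = x - eta *\<^sub>R (sign_vec v + lam *\<^sub>R x);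
          gr = g x' (\<omega> (n + 2))
      in (x', (1 - beta2) *\<^sub>R m + beta2 *\<^sub>R gr, (1 - beta1) *\<^sub>R m + beta1 *\<^sub>R gr))"

definition lion_x where
  "lion_x g beta1 beta2 eta lam x1 \<omega> t = fst (lion_st g beta1 beta2 eta lam x1 \<omega> (t - 1))"
definition lion_v where
  "lion_v g beta1 beta2 eta lam x1 \<omega> t = snd (snd (lion_st g beta1 beta2 eta lam x1 \<omega> (t - 1)))"

end

theory Submission
  imports Defs
begin

lemma norm_add_sq: "(norm (y + z :: real^'d))\<^sup>2 = (norm y)\<^sup>2 + 2 * (y \<bullet> z) + (norm z)\<^sup>2"
  by (simp add: power2_norm_eq_inner inner_add_left inner_add_right inner_commute)

locale lion_ctx =
  fixes D :: "'b measure" and g :: "real^'d \<Rightarrow> 'b \<Rightarrow> real^'d"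
    and f' :: "real^'d \<Rightarrow> real^'d" and \<sigma> :: real
  assumes D_prob: "prob_space D"
    and g_meas: "(\<lambda>(x, \<xi>). g x \<xi>) \<in> borel_measurable (borel \<Otimes>\<^sub>M D)"
    and A3_int: "\<And>x. integrable D (g x)"
    and A3_unbiased: "\<And>x. (\<integral>\<xi>. g x \<xi> \<partial>D) = f' x"
    and A3_var: "\<And>x. (\<integral>\<^sup>+\<xi>. ennreal ((norm (g x \<xi> - f' x))\<^sup>2) \<partial>D) \<le> ennreal (\<sigma>\<^sup>2)"
    and f'_cont: "continuous_on UNIV f'"
begin

lemma g_comp_meas:
  assumes X: "X \<in> borel_measurable N" and Z: "Z \<in> N \<rightarrow>\<^sub>M D"
  shows "(\<lambda>\<omega>. g (X \<omega>) (Z \<omega>)) \<in> borel_measurable N"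
  using measurable_compose[OF measurable_Pair[OF X Z] g_meas] by simp


lemma f'_comp_meas: "X \<in> borel_measurable N \<Longrightarrow> (\<lambda>w. f' (X w)) \<in> borel_measurable N"
  by (rule borel_measurable_continuous_on[OF f'_cont])

lemma inner_bound:
  "(\<integral>\<^sup>+\<xi>. ennreal ((norm (y + b *\<^sub>R (g x \<xi> - f' x)))\<^sup>2) \<partial>D) \<le> ennreal ((norm y)\<^sup>2 + b\<^sup>2 * \<sigma>\<^sup>2)"
proof -
  interpret prob_space D by (rule D_prob)
  define h where "h = (\<lambda>\<xi>. g x \<xi> - f' x)"
  have gm: "g x \<in> borel_measurable D"
    using g_comp_meas[of "\<lambda>_. x" D "\<lambda>\<xi>. \<xi>"] by simp
  have hm: "h \<in> borel_measurable D" unfolding h_def using gm by measurable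
  have hi: "integrable D h" unfolding h_def using A3_int by auto
  have h0: "integral\<^sup>L D h = 0"
    unfolding h_def using A3_int A3_unbiased by (simp add: prob_space)
  have nn: "(\<integral>\<^sup>+\<xi>. ennreal ((norm (h \<xi>))\<^sup>2) \<partial>D) \<le> ennreal (\<sigma>\<^sup>2)"
    unfolding h_def by (rule A3_var)
  have h2i: "integrable D (\<lambda>\<xi>. (norm (h \<xi>))\<^sup>2)"
  proof (rule integrableI_bounded)
    show "(\<lambda>\<xi>. (norm (h \<xi>))\<^sup>2) \<in> borel_measurable D" using hm by measurable
    show "(\<integral>\<^sup>+\<xi>. ennreal (norm ((norm (h \<xi>))\<^sup>2)) \<partial>D) < \<infinity>"
      using nn by (simp add: le_less_trans)
  qed
  have h2: "integral\<^sup>L D (\<lambda>\<xi>. (norm (h \<xi>))\<^sup>2) \<le> \<sigma>\<^sup>2"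
  proof -
    have "ennreal (integral\<^sup>L D (\<lambda>\<xi>. (norm (h \<xi>))\<^sup>2)) \<le> ennreal (\<sigma>\<^sup>2)"
      using nn by (subst nn_integral_eq_integral[symmetric, OF h2i]) auto
    then show ?thesis by (simp add: ennreal_le_iff)
  qed
  define F where "F = (\<lambda>\<xi>. (norm y)\<^sup>2 + 2 * b * (y \<bullet> h \<xi>) + b\<^sup>2 * (norm (h \<xi>))\<^sup>2)"
  have Feq: "\<And>\<xi>. (norm (y + b *\<^sub>R (g x \<xi> - f' x)))\<^sup>2 = F \<xi>"
    unfolding F_def h_def by (simp add: norm_add_sq power_mult_distrib)
  have Fi: "integrable D F" unfolding F_def using hi h2i by auto
  have "(\<integral>\<^sup>+\<xi>. ennreal ((norm (y + b *\<^sub>R (g x \<xi> - f' x)))\<^sup>2) \<partial>D) = ennreal (integral\<^sup>L D F)"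
    unfolding Feq by (rule nn_integral_eq_integral[OF Fi]) (simp add: Feq[symmetric])
  also have "integral\<^sup>L D F = (norm y)\<^sup>2 + b\<^sup>2 * integral\<^sup>L D (\<lambda>\<xi>. (norm (h \<xi>))\<^sup>2)"
    unfolding F_def using hi h2i h0 by (simp add: prob_space)
  also have "\<dots> \<le> (norm y)\<^sup>2 + b\<^sup>2 * \<sigma>\<^sup>2"
    using h2 by (simp add: mult_left_mono)
  finally show ?thesis by (simp add: ennreal_leI order_trans)
qed

lemma key:
  fixes Y X :: "(nat \<Rightarrow> 'b) \<Rightarrow> real^'d" and t :: nat and b :: real
  assumes Ym: "Y \<in> borel_measurable (PiM UNIV (\<lambda>_. D))"
    and Xm: "X \<in> borel_measurable (PiM UNIV (\<lambda>_. D))"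
    and Yinv: "\<And>w z. Y (w(t := z)) = Y w"
    and Xinv: "\<And>w z. X (w(t := z)) = X w"
  shows "(\<integral>\<^sup>+w. ennreal ((norm (Y w + b *\<^sub>R (g (X w) (w t) - f' (X w))))\<^sup>2) \<partial>PiM UNIV (\<lambda>_. D))
     \<le> (\<integral>\<^sup>+w. ennreal ((norm (Y w))\<^sup>2) \<partial>PiM UNIV (\<lambda>_. D)) + ennreal (b\<^sup>2 * \<sigma>\<^sup>2)"
proof -
  let ?M = "PiM UNIV (\<lambda>_::nat. D)"
  interpret D: prob_space D by (rule D_prob)
  interpret P: product_prob_space "\<lambda>_::nat. D" UNIV
    by unfold_locales
  interpret PS: pair_sigma_finite D ?M
    by unfold_locales
  define H where "H = (\<lambda>w. ennreal ((norm (Y w + b *\<^sub>R (g (X w) (w t) - f' (X w))))\<^sup>2))"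
  have comp: "(\<lambda>w. w t) \<in> ?M \<rightarrow>\<^sub>M D"
    by (rule measurable_component_singleton) simp
  have gm: "(\<lambda>w. g (X w) (w t)) \<in> borel_measurable ?M"
    by (rule g_comp_meas[OF Xm comp])
  have f'm: "(\<lambda>w. f' (X w)) \<in> borel_measurable ?M"
    by (rule borel_measurable_continuous_on[OF f'_cont Xm])
  have Hm: "H \<in> borel_measurable ?M"
    unfolding H_def using gm f'm Ym by measurable
  have dist: "distr (D \<Otimes>\<^sub>M ?M) ?M (\<lambda>(x, X). X(t := x)) = ?M"
    using distr_pair_PiM_eq_PiM[of UNIV "\<lambda>_. D" t] D_prob by simp
  have psim: "(\<lambda>(x, X). X(t := x)) \<in> (D \<Otimes>\<^sub>M ?M) \<rightarrow>\<^sub>M ?M"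
    using measurable_fun_upd[where I=UNIV and J=UNIV and i=t and M="\<lambda>_. D" and N="D \<Otimes>\<^sub>M ?M"
        and f=snd and h=fst] by (simp add: case_prod_beta')
  have "integral\<^sup>N ?M H = integral\<^sup>N (distr (D \<Otimes>\<^sub>M ?M) ?M (\<lambda>(x, X). X(t := x))) H"
    using dist by simp
  also have "\<dots> = (\<integral>\<^sup>+p. H ((\<lambda>(x, X). X(t := x)) p) \<partial>(D \<Otimes>\<^sub>M ?M))"
    by (rule nn_integral_distr[OF psim]) (simp add: dist Hm)
  also have "\<dots> = (\<integral>\<^sup>+w. \<integral>\<^sup>+z. H (w(t := z)) \<partial>D \<partial>?M)"
    by (rule PS.nn_integral_snd[symmetric, where f="\<lambda>p. H ((\<lambda>(x, X). X(t := x)) p)", simplified])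
      (rule measurable_comp[OF psim Hm, unfolded comp_def])
  also have "\<dots> = (\<integral>\<^sup>+w. \<integral>\<^sup>+z. ennreal ((norm (Y w + b *\<^sub>R (g (X w) z - f' (X w))))\<^sup>2) \<partial>D \<partial>?M)"
    unfolding H_def by (simp add: Yinv Xinv)
  also have "\<dots> \<le> (\<integral>\<^sup>+w. ennreal ((norm (Y w))\<^sup>2 + b\<^sup>2 * \<sigma>\<^sup>2) \<partial>?M)"
    by (rule nn_integral_mono) (rule inner_bound)
  also have "\<dots> = (\<integral>\<^sup>+w. ennreal ((norm (Y w))\<^sup>2) \<partial>?M) + ennreal (b\<^sup>2 * \<sigma>\<^sup>2)"
    using Ym by (simp add: ennreal_plus nn_integral_add P.emeasure_space_1)
  finally show ?thesis unfolding H_def .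
qed

end

lemma sign_vec_meas: "sign_vec \<in> borel_measurable borel"
proof (subst borel_measurable_euclidean_space, intro ballI)
  fix b :: "real^'d" assume "b \<in> Basis"
  then obtain i where b: "b = axis i 1" by (auto simp: Basis_vec_def)
  have c: "(\<lambda>x::real^'d. x $ i) \<in> borel_measurable borel"
    by (intro borel_measurable_continuous_onI continuous_intros)
  show "(\<lambda>x. sign_vec x \<bullet> b) \<in> borel_measurable borel"
    unfolding b sign_vec_def inner_axis using c by simp
qed

lemma young:
  fixes u v :: "real^'d"
  assumes "0 < c"
  shows "(norm (a *\<^sub>R (u + v)))\<^sup>2 \<le> a\<^sup>2 * (1 + c) * (norm u)\<^sup>2 + a\<^sup>2 * (1 + 1 / c) * (norm v)\<^sup>2"
proof -
  have "2 * (u \<bullet> v) \<le> c * (norm u)\<^sup>2 + (norm v)\<^sup>2 / c"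
  proof -
    have e1: "(norm (sqrt c *\<^sub>R u))\<^sup>2 = c * (norm u)\<^sup>2"
      using assms by (simp add: power_mult_distrib)
    have e2: "(norm ((1 / sqrt c) *\<^sub>R v))\<^sup>2 = (norm v)\<^sup>2 / c"
      using assms by (simp add: power_mult_distrib power_divide)
    have e3: "(sqrt c *\<^sub>R u) \<bullet> ((1 / sqrt c) *\<^sub>R v) = u \<bullet> v"
      using assms by simp
    have "0 \<le> (norm (sqrt c *\<^sub>R u - (1 / sqrt c) *\<^sub>R v))\<^sup>2" by simp
    also have "\<dots> = c * (norm u)\<^sup>2 - 2 * (u \<bullet> v) + (norm v)\<^sup>2 / c"
      using norm_add_sq[of "sqrt c *\<^sub>R u" "- ((1 / sqrt c) *\<^sub>R v)"] e1 e2 e3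
      by (simp del: scaleR_scaleR)
    finally show ?thesis by simp
  qed
  then have "(norm (u + v))\<^sup>2 \<le> (1 + c) * (norm u)\<^sup>2 + (1 + 1 / c) * (norm v)\<^sup>2"
    by (simp add: norm_add_sq algebra_simps add_divide_distrib)
  then have "a\<^sup>2 * (norm (u + v))\<^sup>2 \<le> a\<^sup>2 * ((1 + c) * (norm u)\<^sup>2 + (1 + 1 / c) * (norm v)\<^sup>2)"
    by (simp add: mult_left_mono)
  moreover have "(norm (a *\<^sub>R (u + v)))\<^sup>2 = a\<^sup>2 * (norm (u + v))\<^sup>2"
    by (simp only: norm_scaleR power_mult_distrib power2_abs)
  ultimately show ?thesis by (simp add: algebra_simps)
qed

lemma nn_affine:
  fixes M :: "'a measure"
  assumes P: "prob_space M" and Fm: "F \<in> borel_measurable M"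
    and a: "0 \<le> a" and c: "0 \<le> c" and B: "0 \<le> B"
    and FB: "(\<integral>\<^sup>+w. ennreal (F w) \<partial>M) \<le> ennreal B"
    and G: "\<And>w. G w \<le> a * F w + c" and F0: "\<And>w. 0 \<le> F w"
  shows "(\<integral>\<^sup>+w. ennreal (G w) \<partial>M) \<le> ennreal (a * B + c)"
proof -
  interpret prob_space M by (rule P)
  have "(\<integral>\<^sup>+w. ennreal (G w) \<partial>M) \<le> (\<integral>\<^sup>+w. ennreal (a * F w + c) \<partial>M)"
    by (intro nn_integral_mono ennreal_leI G)
  also have "\<dots> = ennreal a * (\<integral>\<^sup>+w. ennreal (F w) \<partial>M) + ennreal c"
    using Fm a c F0 by (simp add: ennreal_plus ennreal_mult nn_integral_add nn_integral_cmult emeasure_space_1)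
  also have "\<dots> \<le> ennreal a * ennreal B + ennreal c"
    by (intro add_mono mult_left_mono FB) auto
  also have "\<dots> = ennreal (a * B + c)"
    using a B c by (simp add: ennreal_plus ennreal_mult)
  finally show ?thesis .
qed


locale lion = lion_ctx D g f' \<sigma> for D :: "'b measure" and g :: "real^'d \<Rightarrow> 'b \<Rightarrow> real^'d"
    and f' :: "real^'d \<Rightarrow> real^'d" and \<sigma> :: real +
  fixes beta1 beta2 eta lam :: real and x1 :: "real^'d" and L :: real and T :: nat
  assumes b1: "0 < beta1" "beta1 \<le> 1" and b2: "0 < beta2" "beta2 \<le> 1"
    and b12: "beta2\<^sup>2 \<le> beta1" "beta1\<^sup>2 \<le> beta2"
    and eta: "0 < eta" and T: "T \<ge> 1" and lam: "0 \<le> lam" "lam \<le> 1 / (2 * eta * real T)"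
    and x1: "\<And>i. \<bar>x1 $ i\<bar> \<le> eta"
    and A1: "\<And>x y. norm (f' x - f' y) \<le> L * norm (x - y)"
begin

definition "st n w = lion_st g beta1 beta2 eta lam x1 w n"
definition "xs n w = fst (st n w)"
definition "ms n w = fst (snd (st n w))"
definition "vs n w = snd (snd (st n w))"

lemma st_0: "xs 0 w = x1" "ms 0 w = g x1 (w 1)" "vs 0 w = g x1 (w 1)"
  by (simp_all add: xs_def ms_def vs_def st_def)

lemma st_Suc:
  "xs (Suc n) w = xs n w - eta *\<^sub>R (sign_vec (vs n w) + lam *\<^sub>R xs n w)"
  "ms (Suc n) w = (1 - beta2) *\<^sub>R ms n w + beta2 *\<^sub>R g (xs (Suc n) w) (w (n + 2))"
  "vs (Suc n) w = (1 - beta1) *\<^sub>R ms n w + beta1 *\<^sub>R g (xs (Suc n) w) (w (n + 2))"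
  by (simp_all add: xs_def ms_def vs_def st_def Let_def split: prod.split)

lemma st_inv: "(\<And>i. i \<le> Suc n \<Longrightarrow> w i = w' i) \<Longrightarrow> st n w = st n w'"
proof (induction n)
  case 0
  then show ?case by (simp add: st_def)
next
  case (Suc n)
  then have "st n w = st n w'" by simp
  moreover have "w (n + 2) = w' (n + 2)" using Suc.prems by simp
  ultimately show ?case by (simp add: st_def Let_def split: prod.split)
qed

lemma st_upd: "Suc n < k \<Longrightarrow> st n (w(k := z)) = st n w"
  by (rule st_inv) auto

lemma xs_upd: "Suc n < k \<Longrightarrow> xs n (w(k := z)) = xs n w"
  and ms_upd: "Suc n < k \<Longrightarrow> ms n (w(k := z)) = ms n w"
  and vs_upd: "Suc n < k \<Longrightarrow> vs n (w(k := z)) = vs n w"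
  by (simp_all add: xs_def ms_def vs_def st_upd)

lemma xs_Suc_upd: "xs (Suc n) (w(n + 2 := z)) = xs (Suc n) w"
  by (simp add: st_Suc xs_upd vs_upd)

lemma xs_Suc_upd': "xs (Suc n) (w(Suc (Suc n) := z)) = xs (Suc n) w"
  using xs_Suc_upd[of n w z] by (simp add: numeral_2_eq_2)

abbreviation "MM \<equiv> PiM UNIV (\<lambda>_::nat. D)"

lemma st_meas: "xs n \<in> borel_measurable MM \<and> ms n \<in> borel_measurable MM \<and> vs n \<in> borel_measurable MM"
proof (induction n)
  case 0
  have comp: "(\<lambda>w. w 1) \<in> MM \<rightarrow>\<^sub>M D"
    by (rule measurable_component_singleton) simp
  have "(\<lambda>w. g x1 (w 1)) \<in> borel_measurable MM"
    by (rule g_comp_meas[OF _ comp]) simp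
  then show ?case by (simp add: st_0[abs_def])
next
  case (Suc n)
  have comp: "(\<lambda>w. w (n + 2)) \<in> MM \<rightarrow>\<^sub>M D"
    by (rule measurable_component_singleton) simp
  have [measurable]: "xs n \<in> borel_measurable MM" "ms n \<in> borel_measurable MM"
    "vs n \<in> borel_measurable MM" using Suc.IH by auto
  have sv[measurable]: "(\<lambda>w. sign_vec (vs n w)) \<in> borel_measurable MM"
    using measurable_comp[OF _ sign_vec_meas, of "vs n" MM] Suc.IH by (simp add: comp_def)
  have xm[measurable]: "xs (Suc n) \<in> borel_measurable MM"
    unfolding st_Suc[abs_def] by measurable
  have gm: "(\<lambda>w. g (xs (Suc n) w) (w (n + 2))) \<in> borel_measurable MM"
    by (rule g_comp_meas[OF xm comp])
  note gm[measurable]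
  show ?case unfolding st_Suc(2,3)[abs_def] by (intro conjI xm) measurable
qed

lemma eta_lam: "0 \<le> eta * lam" "eta * lam * real T \<le> 1 / 2"
proof -
  show "0 \<le> eta * lam" using eta lam by simp
  have "eta * lam * real T \<le> eta * (1 / (2 * eta * real T)) * real T"
    using eta lam T by (intro mult_right_mono mult_left_mono) auto
  also have "\<dots> = 1 / 2" using eta T by (simp add: field_simps)
  finally show "eta * lam * real T \<le> 1 / 2" .
qed

lemma xs_bound: "\<bar>xs n w $ i\<bar> \<le> real (Suc n) * eta"
proof (induction n)
  case 0
  then show ?case using x1 by (simp add: st_0)
next
  case (Suc n)
  have el1: "eta * lam \<le> 1"
  proof -
    have "eta * lam \<le> eta * lam * real T" using eta_lam(1) T
      by (metis mult_le_cancel_left1 mult.commute of_nat_1 of_nat_mono order_trans_rules(23) linorder_not_le mult_le_cancel_left2)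
    then show ?thesis using eta_lam(2) by simp
  qed
  have sg: "\<bar>sgn (vs n w $ i)\<bar> \<le> 1" by (simp add: abs_sgn_eq)
  have "xs (Suc n) w $ i = (1 - eta * lam) * xs n w $ i - eta * sgn (vs n w $ i)"
    by (simp add: st_Suc sign_vec_def algebra_simps)
  also have "\<bar>\<dots>\<bar> \<le> (1 - eta * lam) * \<bar>xs n w $ i\<bar> + eta * \<bar>sgn (vs n w $ i)\<bar>"
    using el1 eta by (simp add: abs_mult abs_triangle_ineq4 order_trans[OF abs_triangle_ineq4])
  also have "\<dots> \<le> 1 * \<bar>xs n w $ i\<bar> + eta * 1"
    using el1 eta_lam(1) eta sg by (intro add_mono mult_right_mono mult_left_mono) auto
  also have "\<dots> \<le> real (Suc (Suc n)) * eta"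
    using Suc.IH by (simp add: algebra_simps)
  finally show ?case .
qed


lemma step_bound:
  assumes "Suc n < T"
  shows "(norm (xs (Suc n) w - xs n w))\<^sup>2 \<le> 4 * eta\<^sup>2 * real CARD('d)"
proof -
  define c where "c = xs (Suc n) w - xs n w"
  have ci: "(c $ i)\<^sup>2 \<le> 4 * eta\<^sup>2" for i
  proof -
    have "c $ i = - (eta * (sgn (vs n w $ i) + lam * xs n w $ i))"
      by (simp add: c_def st_Suc sign_vec_def)
    have "\<bar>lam * xs n w $ i\<bar> \<le> lam * (real (Suc n) * eta)"
      using xs_bound[of n w i] lam by (simp add: abs_mult mult_left_mono)
    also have "\<dots> \<le> lam * (real T * eta)"
      using assms lam eta by (intro mult_left_mono mult_right_mono) auto
    also have "\<dots> = eta * lam * real T" by simp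
    also have "\<dots> \<le> 1 / 2" by (rule eta_lam(2))
    finally have l: "\<bar>lam * xs n w $ i\<bar> \<le> 1 / 2" .
    have sg: "\<bar>sgn (vs n w $ i)\<bar> \<le> 1" by (simp add: abs_sgn_eq)
    have "\<bar>sgn (vs n w $ i) + lam * xs n w $ i\<bar> \<le> 2"
      using l sg by linarith
    then have "\<bar>c $ i\<bar> \<le> eta * 2"
      using eta \<open>c $ i = _\<close> by (simp add: abs_mult mult_left_mono)
    then have "\<bar>c $ i\<bar>\<^sup>2 \<le> (eta * 2)\<^sup>2"
      by (intro power_mono) auto
    then show ?thesis by (simp add: power_mult_distrib)
  qed
  have "(norm c)\<^sup>2 = c \<bullet> c" by (rule power2_norm_eq_inner)
  also have "\<dots> = (\<Sum>i\<in>UNIV. c $ i \<bullet> c $ i)" by (simp only: inner_vec_def)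
  also have "\<dots> = (\<Sum>i\<in>UNIV. (c $ i)\<^sup>2)" by (simp add: power2_eq_square)
  also have "\<dots> \<le> (\<Sum>i\<in>(UNIV::'d set). 4 * eta\<^sup>2)"
    by (intro sum_mono ci)
  also have "\<dots> = 4 * eta\<^sup>2 * real CARD('d)" by simp
  finally show ?thesis unfolding c_def .
qed

definition "\<delta>2 = L\<^sup>2 * (4 * eta\<^sup>2 * real CARD('d))"

lemma \<delta>2_nonneg: "0 \<le> \<delta>2" unfolding \<delta>2_def by simp

lemma drift:
  assumes "Suc n < T"
  shows "(norm (f' (xs n w) - f' (xs (Suc n) w)))\<^sup>2 \<le> \<delta>2"
proof -
  have a: "norm (f' (xs n w) - f' (xs (Suc n) w)) \<le> L * norm (xs (Suc n) w - xs n w)"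
    using A1[of "xs n w" "xs (Suc n) w"] by (simp add: norm_minus_commute)
  then have "(norm (f' (xs n w) - f' (xs (Suc n) w)))\<^sup>2 \<le> (L * norm (xs (Suc n) w - xs n w))\<^sup>2"
    by (intro power_mono) auto
  also have "\<dots> = L\<^sup>2 * (norm (xs (Suc n) w - xs n w))\<^sup>2" by (simp add: power_mult_distrib)
  also have "\<dots> \<le> \<delta>2" unfolding \<delta>2_def
    by (intro mult_left_mono step_bound assms) auto
  finally show ?thesis .
qed

definition "Ee n = (\<integral>\<^sup>+w. ennreal ((norm (ms n w - f' (xs n w)))\<^sup>2) \<partial>MM)"

lemma gen_step:
  assumes n: "Suc n < T" and bb: "0 < bb" "bb \<le> 1" and IH: "Ee n \<le> ennreal B" and B: "0 \<le> B"
  shows "(\<integral>\<^sup>+w. ennreal ((norm ((1 - bb) *\<^sub>R ms n w + bb *\<^sub>R g (xs (Suc n) w) (w (n + 2))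
            - f' (xs (Suc n) w)))\<^sup>2) \<partial>MM) \<le> ennreal ((1 - bb) * B + \<delta>2 / bb + bb\<^sup>2 * \<sigma>\<^sup>2)"
proof -
  interpret D: prob_space D by (rule D_prob)
  interpret P: product_prob_space "\<lambda>_::nat. D" UNIV by unfold_locales
  have [measurable]: "xs n \<in> borel_measurable MM" "ms n \<in> borel_measurable MM"
    "xs (Suc n) \<in> borel_measurable MM" using st_meas by auto
  have [measurable]: "(\<lambda>w. f' (xs n w)) \<in> borel_measurable MM" "(\<lambda>w. f' (xs (Suc n) w)) \<in> borel_measurable MM"
    by (auto intro!: f'_comp_meas)
  define Y where "Y = (\<lambda>w. (1 - bb) *\<^sub>R ((ms n w - f' (xs n w)) + (f' (xs n w) - f' (xs (Suc n) w))))"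
  have Ym: "Y \<in> borel_measurable MM" unfolding Y_def by measurable
  have id: "(1 - bb) *\<^sub>R ms n w + bb *\<^sub>R g (xs (Suc n) w) (w (n + 2)) - f' (xs (Suc n) w)
      = Y w + bb *\<^sub>R (g (xs (Suc n) w) (w (n + 2)) - f' (xs (Suc n) w))" for w
    unfolding Y_def by (simp add: algebra_simps)
  have "(\<integral>\<^sup>+w. ennreal ((norm ((1 - bb) *\<^sub>R ms n w + bb *\<^sub>R g (xs (Suc n) w) (w (n + 2))
            - f' (xs (Suc n) w)))\<^sup>2) \<partial>MM)
      \<le> (\<integral>\<^sup>+w. ennreal ((norm (Y w))\<^sup>2) \<partial>MM) + ennreal (bb\<^sup>2 * \<sigma>\<^sup>2)"
    unfolding id
    by (rule key[OF Ym]) (auto simp: Y_def ms_upd xs_upd xs_Suc_upd')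
  also have "(\<integral>\<^sup>+w. ennreal ((norm (Y w))\<^sup>2) \<partial>MM) \<le> ennreal ((1 - bb) * B + \<delta>2 / bb)"
  proof (rule nn_affine[where F="\<lambda>w. (norm (ms n w - f' (xs n w)))\<^sup>2"])
    show "prob_space MM" by (rule P.prob_space_axioms)
    show "(\<lambda>w. (norm (ms n w - f' (xs n w)))\<^sup>2) \<in> borel_measurable MM" by measurable
    show "0 \<le> 1 - bb" "0 \<le> \<delta>2 / bb" "0 \<le> B" using bb B \<delta>2_nonneg by auto
    show "(\<integral>\<^sup>+w. ennreal ((norm (ms n w - f' (xs n w)))\<^sup>2) \<partial>MM) \<le> ennreal B"
      using IH by (simp add: Ee_def)
    show "0 \<le> (norm (ms n w - f' (xs n w)))\<^sup>2" for w by simp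
    fix w
    have c1: "(1 - bb)\<^sup>2 * (1 + bb) \<le> 1 - bb"
    proof -
      have "(1 - bb)\<^sup>2 * (1 + bb) = (1 - bb) * (1 - bb\<^sup>2)" by (simp add: power2_eq_square algebra_simps)
      also have "\<dots> \<le> (1 - bb) * 1" using bb by (intro mult_left_mono) auto
      finally show ?thesis by simp
    qed
    have c2: "(1 - bb)\<^sup>2 * (1 + 1 / bb) \<le> 1 / bb"
    proof -
      have "(1 - bb)\<^sup>2 * (1 + 1 / bb) = (1 - bb)\<^sup>2 * (1 + bb) / bb" using bb by (simp add: field_simps)
      also have "\<dots> \<le> (1 - bb) / bb" using c1 bb by (simp add: divide_right_mono)
      also have "\<dots> \<le> 1 / bb" using bb by (simp add: divide_right_mono)
      finally show ?thesis .
    qed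
    have "(norm (Y w))\<^sup>2 \<le> (1 - bb)\<^sup>2 * (1 + bb) * (norm (ms n w - f' (xs n w)))\<^sup>2
        + (1 - bb)\<^sup>2 * (1 + 1 / bb) * (norm (f' (xs n w) - f' (xs (Suc n) w)))\<^sup>2"
      unfolding Y_def by (rule young) (rule bb)
    also have "\<dots> \<le> (1 - bb) * (norm (ms n w - f' (xs n w)))\<^sup>2 + 1 / bb * \<delta>2"
      using c1 c2 drift[OF n, of w] bb
      by (intro add_mono mult_mono) auto
    finally show "(norm (Y w))\<^sup>2 \<le> (1 - bb) * (norm (ms n w - f' (xs n w)))\<^sup>2 + \<delta>2 / bb" by simp
  qed
  finally show ?thesis
    using bb B \<delta>2_nonneg by (simp add: ennreal_plus[symmetric] del: ennreal_plus)
qed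


lemma base: "(\<integral>\<^sup>+w. ennreal ((norm (g x1 (w 1) - f' x1))\<^sup>2) \<partial>MM) \<le> ennreal (\<sigma>\<^sup>2)"
  using key[of "\<lambda>_. 0" "\<lambda>_. x1" 1 1] by simp

definition "Bn n = (1 - beta2) ^ n * \<sigma>\<^sup>2 + \<delta>2 / beta2\<^sup>2 + beta2 * \<sigma>\<^sup>2"

lemma Bn_nonneg: "0 \<le> Bn n"
  unfolding Bn_def using b2 \<delta>2_nonneg by simp

lemma Ee_bound: "n < T \<Longrightarrow> Ee n \<le> ennreal (Bn n)"
proof (induction n)
  case 0
  have "Ee 0 \<le> ennreal (\<sigma>\<^sup>2)" using base by (simp add: Ee_def st_0)
  also have "\<dots> \<le> ennreal (Bn 0)" unfolding Bn_def using b2 \<delta>2_nonneg by (intro ennreal_leI) simp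
  finally show ?case .
next
  case (Suc n)
  have "Ee (Suc n) \<le> ennreal ((1 - beta2) * Bn n + \<delta>2 / beta2 + beta2\<^sup>2 * \<sigma>\<^sup>2)"
    unfolding Ee_def st_Suc(2)
    by (rule gen_step[OF Suc.prems b2 _ Bn_nonneg]) (use Suc in auto)
  also have "(1 - beta2) * Bn n + \<delta>2 / beta2 + beta2\<^sup>2 * \<sigma>\<^sup>2 = Bn (Suc n)"
    unfolding Bn_def using b2 by (simp add: field_simps power2_eq_square)
  finally show ?case .
qed

definition "Vv n = (\<integral>\<^sup>+w. ennreal ((norm (vs n w - f' (xs n w)))\<^sup>2) \<partial>MM)"
definition "Kc = 2 * \<delta>2 / beta2\<^sup>2 + 2 * beta2 * \<sigma>\<^sup>2"
definition "Cn n = (if n = 0 then \<sigma>\<^sup>2 else (1 - beta2) ^ (n - 1) * \<sigma>\<^sup>2 + Kc)"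

lemma Vv_bound: "n < T \<Longrightarrow> Vv n \<le> ennreal (Cn n)"
proof (cases n)
  case 0
  then show ?thesis using base by (simp add: Vv_def st_0 Cn_def)
next
  case (Suc k)
  assume nT: "n < T"
  have "Vv n \<le> ennreal ((1 - beta1) * Bn k + \<delta>2 / beta1 + beta1\<^sup>2 * \<sigma>\<^sup>2)"
    unfolding Vv_def Suc st_Suc(3)
    by (rule gen_step[OF _ b1 Ee_bound Bn_nonneg]) (use nT Suc in auto)
  also have "(1 - beta1) * Bn k + \<delta>2 / beta1 + beta1\<^sup>2 * \<sigma>\<^sup>2 \<le> Cn n"
  proof -
    have "(1 - beta1) * Bn k \<le> Bn k" using b1 Bn_nonneg[of k] by (simp add: mult_le_cancel_right1 algebra_simps)
    moreover have "\<delta>2 / beta1 \<le> \<delta>2 / beta2\<^sup>2"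
      using b12 b1 b2 \<delta>2_nonneg by (intro divide_left_mono) auto
    moreover have "beta1\<^sup>2 * \<sigma>\<^sup>2 \<le> beta2 * \<sigma>\<^sup>2"
      using b12 by (intro mult_right_mono) auto
    ultimately show ?thesis unfolding Cn_def Kc_def Bn_def using Suc by simp
  qed
  finally show ?thesis by (simp add: ennreal_leI order_trans)
qed


lemma sum_shift1: fixes N :: nat and h :: "nat \<Rightarrow> real"
  shows "(\<Sum>t = 1..N. h (t - 1)) = (\<Sum>n<N. h n)"
  by (induction N) (auto simp: sum.cl_ivl_Suc)

lemma Cn_sum: "(1 / real T) * (\<Sum>n<T. Cn n)
   \<le> 2 * \<sigma>\<^sup>2 / (beta2 * real T) + 16 * eta\<^sup>2 * L\<^sup>2 * real CARD('d) / beta2\<^sup>2 + 2 * beta2 * \<sigma>\<^sup>2"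
proof -
  obtain m where m: "T = Suc m" using T by (cases T) auto
  have geo: "(\<Sum>n<m. (1 - beta2) ^ n) \<le> 1 / beta2"
  proof -
    have "(\<Sum>n<m. (1 - beta2) ^ n) = (1 - (1 - beta2) ^ m) / (1 - (1 - beta2))"
      using b2 by (subst sum_gp_strict) auto
    also have "\<dots> \<le> 1 / beta2"
    proof -
      have "0 \<le> (1 - beta2) ^ m" using b2 by simp
      then show ?thesis using b2 by (simp add: divide_right_mono)
    qed
    finally show ?thesis .
  qed
  have K0: "0 \<le> Kc" unfolding Kc_def using \<delta>2_nonneg b2 by simp
  have "(\<Sum>n<T. Cn n) = \<sigma>\<^sup>2 + (\<Sum>n<m. (1 - beta2) ^ n * \<sigma>\<^sup>2 + Kc)"
    unfolding m by (subst sum.lessThan_Suc_shift) (simp add: Cn_def)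
  also have "\<dots> = \<sigma>\<^sup>2 + (\<Sum>n<m. (1 - beta2) ^ n) * \<sigma>\<^sup>2 + real m * Kc"
    by (simp add: sum.distrib sum_distrib_right)
  also have "\<dots> \<le> \<sigma>\<^sup>2 / beta2 + (1 / beta2) * \<sigma>\<^sup>2 + real T * Kc"
  proof -
    have "\<sigma>\<^sup>2 * beta2 \<le> \<sigma>\<^sup>2 * 1" using b2 by (intro mult_left_mono) auto
    then have "\<sigma>\<^sup>2 \<le> \<sigma>\<^sup>2 / beta2" using b2 by (simp add: le_divide_eq)
    moreover have "(\<Sum>n<m. (1 - beta2) ^ n) * \<sigma>\<^sup>2 \<le> (1 / beta2) * \<sigma>\<^sup>2"
      using geo by (intro mult_right_mono) auto
    moreover have "real m * Kc \<le> real T * Kc" using K0 m by (intro mult_right_mono) auto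
    ultimately show ?thesis by linarith
  qed
  also have "\<dots> = 2 * \<sigma>\<^sup>2 / beta2 + real T * Kc" by simp
  finally have S: "(\<Sum>n<T. Cn n) \<le> 2 * \<sigma>\<^sup>2 / beta2 + real T * Kc" .
  have "(1 / real T) * (\<Sum>n<T. Cn n) \<le> (1 / real T) * (2 * \<sigma>\<^sup>2 / beta2 + real T * Kc)"
    using S T by (intro mult_left_mono) auto
  also have "\<dots> = 2 * \<sigma>\<^sup>2 / (beta2 * real T) + Kc" using T by (simp add: field_simps)
  also have "Kc \<le> 16 * eta\<^sup>2 * L\<^sup>2 * real CARD('d) / beta2\<^sup>2 + 2 * beta2 * \<sigma>\<^sup>2"
  proof -
    have "2 * \<delta>2 / beta2\<^sup>2 \<le> 16 * eta\<^sup>2 * L\<^sup>2 * real CARD('d) / beta2\<^sup>2"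
      unfolding \<delta>2_def using b2 by (intro divide_right_mono) (auto simp: algebra_simps)
    then show ?thesis unfolding Kc_def by simp
  qed
  finally show ?thesis by simp
qed

lemma final:
  "(\<integral>\<^sup>+w. ennreal ((1 / real T) *
            (\<Sum>t = 1..T. (norm (lion_v g beta1 beta2 eta lam x1 w t
                                 - f' (lion_x g beta1 beta2 eta lam x1 w t)))\<^sup>2)) \<partial>MM)
   \<le> ennreal (2 * \<sigma>\<^sup>2 / (beta2 * real T) + 16 * eta\<^sup>2 * L\<^sup>2 * real CARD('d) / beta2\<^sup>2 + 2 * beta2 * \<sigma>\<^sup>2)"
proof -
  interpret D: prob_space D by (rule D_prob)
  interpret P: product_prob_space "\<lambda>_::nat. D" UNIV by unfold_locales
  define F where "F n w = (norm (vs n w - f' (xs n w)))\<^sup>2" for n w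
  have Fm: "(\<lambda>w. ennreal (F n w)) \<in> borel_measurable MM" for n
  proof -
    have [measurable]: "xs n \<in> borel_measurable MM" "vs n \<in> borel_measurable MM" using st_meas by auto
    have [measurable]: "(\<lambda>w. f' (xs n w)) \<in> borel_measurable MM" by (auto intro!: f'_comp_meas)
    show ?thesis unfolding F_def by measurable
  qed
  have lv: "(\<Sum>t = 1..T. (norm (lion_v g beta1 beta2 eta lam x1 w t
                                 - f' (lion_x g beta1 beta2 eta lam x1 w t)))\<^sup>2) = (\<Sum>n<T. F n w)" for w
    using sum_shift1[of "\<lambda>n. F n w" T]
    by (simp add: F_def lion_v_def lion_x_def vs_def xs_def st_def)
  have "(\<integral>\<^sup>+w. ennreal ((1 / real T) * (\<Sum>n<T. F n w)) \<partial>MM)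
      = (\<integral>\<^sup>+w. ennreal (1 / real T) * (\<Sum>n<T. ennreal (F n w)) \<partial>MM)"
    by (intro nn_integral_cong, subst ennreal_mult) (auto simp: F_def sum_nonneg sum_ennreal)
  also have "\<dots> = ennreal (1 / real T) * (\<integral>\<^sup>+w. (\<Sum>n<T. ennreal (F n w)) \<partial>MM)"
    by (rule nn_integral_cmult) (use Fm in auto)
  also have "\<dots> = ennreal (1 / real T) * (\<Sum>n<T. Vv n)"
  proof -
    have "(\<integral>\<^sup>+w. (\<Sum>n<T. ennreal (F n w)) \<partial>MM) = (\<Sum>n<T. Vv n)"
      unfolding Vv_def F_def[symmetric] by (rule nn_integral_sum) (use Fm in auto)
    then show ?thesis by simp
  qed
  also have "\<dots> \<le> ennreal (1 / real T) * (\<Sum>n<T. ennreal (Cn n))"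
    by (intro mult_left_mono sum_mono Vv_bound) auto
  also have "\<dots> = ennreal ((1 / real T) * (\<Sum>n<T. Cn n))"
  proof -
    have "0 \<le> Cn n" for n unfolding Cn_def Kc_def using b2 \<delta>2_nonneg by auto
    then show ?thesis by (subst ennreal_mult) (auto simp: sum_ennreal sum_nonneg)
  qed
  also have "\<dots> \<le> ennreal (2 * \<sigma>\<^sup>2 / (beta2 * real T) + 16 * eta\<^sup>2 * L\<^sup>2 * real CARD('d) / beta2\<^sup>2 + 2 * beta2 * \<sigma>\<^sup>2)"
    by (intro ennreal_leI Cn_sum)
  finally show ?thesis unfolding lv .
qed

end

theorem mainTheorem3:
  fixes f :: "real^'d \<Rightarrow> real" and f' :: "real^'d \<Rightarrow> real^'d"
    and D :: "'b measure" and g :: "real^'d \<Rightarrow> 'b \<Rightarrow> real^'d"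
    and L \<sigma> beta1 beta2 eta lam :: real and x1 :: "real^'d" and T :: nat
  assumes D_prob: "prob_space D"
    and g_meas: "(\<lambda>(x, \<xi>). g x \<xi>) \<in> borel_measurable (borel \<Otimes>\<^sub>M D)"
    and grad: "\<And>x. (f has_derivative (\<lambda>h. f' x \<bullet> h)) (at x)"
    and A1: "\<And>x y. norm (f' x - f' y) \<le> L * norm (x - y)"
    and A3_int: "\<And>x. integrable D (g x)"
    and A3_unbiased: "\<And>x. (\<integral>\<xi>. g x \<xi> \<partial>D) = f' x"
    and A3_var: "\<And>x. (\<integral>\<^sup>+\<xi>. ennreal ((norm (g x \<xi> - f' x))\<^sup>2) \<partial>D) \<le> ennreal (\<sigma>\<^sup>2)"
    and b1: "0 < beta1" "beta1 \<le> 1"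
    and b2: "0 < beta2" "beta2 \<le> 1"
    and b12: "beta2\<^sup>2 \<le> beta1" "beta1 \<le> sqrt beta2"
    and eta: "0 < eta"
    and T: "T \<ge> 1"
    and lam: "0 \<le> lam" "lam \<le> 1 / (2 * eta * real T)"
    and x1: "\<And>i. \<bar>x1 $ i\<bar> \<le> eta"
  shows "(\<integral>\<^sup>+\<omega>. ennreal ((1 / real T) *
            (\<Sum>t = 1..T. (norm (lion_v g beta1 beta2 eta lam x1 \<omega> t
                                 - f' (lion_x g beta1 beta2 eta lam x1 \<omega> t)))\<^sup>2))
           \<partial>(PiM (UNIV :: nat set) (\<lambda>_. D)))
         \<le> ennreal (2 * \<sigma>\<^sup>2 / (beta2 * real T)
                    + 16 * eta\<^sup>2 * L\<^sup>2 * real CARD('d) / beta2\<^sup>2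
                    + 2 * beta2 * \<sigma>\<^sup>2)"
  proof -
  have cont: "continuous_on UNIV f'"
  proof (rule lipschitz_on_continuous_on)
    show "lipschitz_on \<bar>L\<bar> UNIV f'"
    proof (rule lipschitz_onI)
      fix x y :: "real^'d"
      have "norm (f' x - f' y) \<le> L * norm (x - y)" by (rule A1)
      also have "\<dots> \<le> \<bar>L\<bar> * norm (x - y)" by (intro mult_right_mono) auto
      finally show "dist (f' x) (f' y) \<le> \<bar>L\<bar> * dist x y" by (simp add: dist_norm)
    qed simp
  qed
  have b12': "beta1\<^sup>2 \<le> beta2"
  proof -
    have "beta1\<^sup>2 \<le> (sqrt beta2)\<^sup>2" using b12 b1 by (intro power_mono) auto
    then show ?thesis using b2 by simp
  qed
  interpret lion D g f' \<sigma> beta1 beta2 eta lam x1 L T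
    by (rule lion.intro[OF lion_ctx.intro[OF D_prob g_meas A3_int A3_unbiased A3_var cont]
        lion_axioms.intro[OF b1 b2 b12(1) b12' eta T lam x1 A1]])
  show ?thesis by (rule final)
qed

end
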